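(* Let $(X,\mathcal{A},\mu)$ be a probability space and let $\{E_i\}_{i\in\mathbb{N}}$ be a sequence of sets in $\mathcal{A}$. Suppose there exists $0<c_0<1$ such that the following holds: for every $\delta>0$ and every pair of integers $q_1<q_2$ there exist an infinite set $\mathcal{I}\subset\mathbb{N}$ and $i_0=i_0(q_1,q_2,\delta)$ such that $\inf\{\mu(E_i):i\in\mathcal{I}\}>c_0$ and $$\mu(A\cap E_i)\le(1+\delta)\mu(A)\mu(E_i)\quad\text{for all }i\in\mathcal{I}\text{ with }i\ge i_0,\qquad\text{where }A=\bigcup_{j=q_1}^{q_2}E_j.$$ Then $\mu(E_\infty)=1$. In particular, $\mu(E_\infty)=1$ whenever $\limsup_{i\to\infty}\mu(E_i)>0$ and condition (M1) holds.
   Context: $E_\infty:=\limsup_{i\to\infty}E_i=\bigcap_{t=1}^\infty\bigcup_{i=t}^\infty E_i$. Condition (M1): for every $\delta>0$ and all natural numbers $q_1<q_2$ there exists $i_0=i_0(q_1,q_2,\delta)$ such that for all $i\ge i_0$, $\mu(A\cap E_i)\le(1+\delta)\mu(A)\mu(E_i)$ where $A=\bigcup_{j=q_1}^{q_2}E_j$. *)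

theory Defs
  imports "HOL-Probability.Probability"
begin

definition limsup_set :: "(nat \<Rightarrow> 'a set) \<Rightarrow> 'a set" where
  "limsup_set E = (\<Inter>t. \<Union>i\<in>{t..}. E i)"

end

theory Submission
  imports Defs
begin

lemma core:
  fixes M :: "'a measure" and E :: "nat \<Rightarrow> 'a set" and c :: real
  assumes P: "prob_space M" and EM: "\<And>i. E i \<in> sets M" and c: "c > 0"
    and H: "\<And>\<delta> q1 q2. \<delta> > 0 \<Longrightarrow> q1 < q2 \<Longrightarrow> \<exists>I i0. infinite I \<and> (\<forall>i\<in>I. measure M (E i) \<ge> c) \<and>
       (\<forall>i\<in>I. i \<ge> i0 \<longrightarrow> measure M ((\<Union>j\<in>{q1..q2}. E j) \<inter> E i)
                      \<le> (1 + \<delta>) * measure M (\<Union>j\<in>{q1..q2}. E j) * measure M (E i))"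
  shows "measure M (limsup_set E) = 1"
proof -
  interpret prob_space M by fact
  define F where "F t = (\<Union>i\<in>{t..}. E i)" for t
  have FM: "F t \<in> sets M" for t unfolding F_def using EM by auto
  have lsF: "limsup_set E = (\<Inter>t. F t)" unfolding limsup_set_def F_def by simp
  have decF: "decseq F" unfolding decseq_def F_def by (auto, force)
  have limF: "(\<lambda>t. measure M (F t)) \<longlonglongrightarrow> measure M (limsup_set E)"
    unfolding lsF by (rule finite_Lim_measure_decseq) (use FM decF in auto)
  define L where "L = measure M (limsup_set E)"
  have "L \<le> 1" unfolding L_def by simp
  show ?thesis
  proof (rule ccontr)
    assume "measure M (limsup_set E) \<noteq> 1"
    with \<open>L \<le> 1\<close> have Ll: "L < 1" unfolding L_def by linarith
    define \<eta> where "\<eta> = 1 - L"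
    have eta: "\<eta> > 0" using Ll unfolding \<eta>_def by simp
    define \<epsilon> where "\<epsilon> = min (\<eta>/4) (c*\<eta>/4)"
    have eps: "\<epsilon> > 0" using eta c unfolding \<epsilon>_def by auto
    from limF eps have "eventually (\<lambda>t. dist (measure M (F t)) L < \<epsilon>) sequentially"
      unfolding L_def by (rule tendstoD)
    then obtain q1 where q1: "dist (measure M (F q1)) L < \<epsilon>"
      by (auto simp: eventually_sequentially)
    define A where "A n = (\<Union>j\<in>{q1..n}. E j)" for n
    have AM: "A n \<in> sets M" for n unfolding A_def using EM by auto
    have incA: "incseq A" unfolding incseq_def A_def by (auto, force)
    have UA: "(\<Union>n. A n) = F q1" unfolding A_def F_def by (auto, force)
    have limA: "(\<lambda>n. measure M (A n)) \<longlonglongrightarrow> measure M (F q1)"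
      unfolding UA[symmetric] by (rule finite_Lim_measure_incseq) (use AM incA in auto)
    from tendstoD[OF limA eps] obtain N where
      N: "\<And>n. n \<ge> N \<Longrightarrow> dist (measure M (A n)) (measure M (F q1)) < \<epsilon>"
      by (auto simp: eventually_sequentially)
    define q2 where "q2 = max N (Suc q1)"
    have q12: "q1 < q2" unfolding q2_def by simp
    have Aq2: "dist (measure M (A q2)) (measure M (F q1)) < \<epsilon>" using N unfolding q2_def by simp
    have AF: "A q2 \<subseteq> F q1" unfolding A_def F_def by auto
    have muA_le: "measure M (A q2) \<le> measure M (F q1)" using AF FM by (simp add: finite_measure_mono)
    have diffsmall: "measure M (F q1 - A q2) < \<epsilon>"
      using finite_measure_Diff[OF FM AM AF] muA_le Aq2 by (simp add: dist_real_def)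
    have muA_up: "measure M (A q2) \<le> L + \<epsilon>" using muA_le q1 by (simp add: dist_real_def)
    define \<delta> where "\<delta> = \<eta>/4"
    have dpos: "\<delta> > 0" using eta unfolding \<delta>_def by simp
    have key: "1 - (1+\<delta>) * measure M (A q2) \<ge> \<eta>/2"
    proof -
      have m0: "measure M (A q2) \<ge> 0" by simp
      have "measure M (A q2) \<le> 1" by simp
      have "(1+\<delta>) * measure M (A q2) = measure M (A q2) + \<delta> * measure M (A q2)" by (simp add: algebra_simps)
      also have "\<delta> * measure M (A q2) \<le> \<delta>" using dpos \<open>measure M (A q2) \<le> 1\<close>
        by (simp add: mult_left_le)
      finally have "(1+\<delta>) * measure M (A q2) \<le> L + \<epsilon> + \<delta>" using muA_up by linarith
      moreover have "\<epsilon> \<le> \<eta>/4" unfolding \<epsilon>_def by simp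
      moreover have "\<delta> = \<eta>/4" "\<eta> = 1 - L" unfolding \<delta>_def \<eta>_def by simp_all
      ultimately show ?thesis by linarith
    qed
    from H[OF dpos q12] obtain I i0 where I: "infinite I" and Ic: "\<forall>i\<in>I. measure M (E i) \<ge> c"
      and Iin: "\<forall>i\<in>I. i \<ge> i0 \<longrightarrow> measure M (A q2 \<inter> E i) \<le> (1 + \<delta>) * measure M (A q2) * measure M (E i)"
      unfolding A_def by blast
    from I obtain i where iI: "i \<in> I" and ige: "i \<ge> max i0 q1"
      using infinite_nat_iff_unbounded_le by blast
    have EiF: "E i \<subseteq> F q1" unfolding F_def using ige by auto
    have "measure M (E i - A q2) \<le> measure M (F q1 - A q2)"
      using EiF FM AM by (intro finite_measure_mono) auto
    with diffsmall have up: "measure M (E i - A q2) < \<epsilon>" by simp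
    have "measure M (E i - A q2) = measure M (E i) - measure M (E i \<inter> A q2)"
      using finite_measure_Diff'[OF EM AM] .
    also have "E i \<inter> A q2 = A q2 \<inter> E i" by auto
    finally have "measure M (E i - A q2) \<ge> measure M (E i) - (1 + \<delta>) * measure M (A q2) * measure M (E i)"
      using Iin iI ige by auto
    also have "measure M (E i) - (1 + \<delta>) * measure M (A q2) * measure M (E i)
       = measure M (E i) * (1 - (1 + \<delta>) * measure M (A q2))" by (simp add: algebra_simps)
    also have "\<dots> \<ge> c * (\<eta>/2)"
      using Ic iI key c eta by (intro mult_mono) auto
    finally have "measure M (E i - A q2) \<ge> c * \<eta> / 2" by simp
    moreover have "\<epsilon> \<le> c*\<eta>/4" unfolding \<epsilon>_def by simp
    moreover have "c*\<eta>/4 < c*\<eta>/2" using c eta by simp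
    ultimately show False using up by linarith
  qed
qed


theorem theorem4:
  fixes M :: "'a measure" and E :: "nat \<Rightarrow> 'a set"
  assumes "prob_space M"
    and "\<And>i. E i \<in> sets M"
  shows "((\<exists>c0::real. 0 < c0 \<and> c0 < 1 \<and>
            (\<forall>\<delta>>0. \<forall>q1 q2::nat. q1 < q2 \<longrightarrow>
              (\<exists>I::nat set. \<exists>i0::nat. infinite I \<and>
                 (INF i\<in>I. measure M (E i)) > c0 \<and>
                 (\<forall>i\<in>I. i \<ge> i0 \<longrightarrow>
                    measure M ((\<Union>j\<in>{q1..q2}. E j) \<inter> E i)
                      \<le> (1 + \<delta>) * measure M (\<Union>j\<in>{q1..q2}. E j) * measure M (E i)))))
          \<longrightarrow> measure M (limsup_set E) = 1)
       \<and> ((limsup (\<lambda>i. ereal (measure M (E i))) > 0 \<and>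
            (\<forall>\<delta>>0. \<forall>q1 q2::nat. q1 < q2 \<longrightarrow>
              (\<exists>i0::nat. \<forall>i\<ge>i0.
                 measure M ((\<Union>j\<in>{q1..q2}. E j) \<inter> E i)
                   \<le> (1 + \<delta>) * measure M (\<Union>j\<in>{q1..q2}. E j) * measure M (E i))))
          \<longrightarrow> measure M (limsup_set E) = 1)"
proof (intro conjI impI)
  interpret prob_space M by fact
  assume "\<exists>c0::real. 0 < c0 \<and> c0 < 1 \<and>
            (\<forall>\<delta>>0. \<forall>q1 q2::nat. q1 < q2 \<longrightarrow>
              (\<exists>I::nat set. \<exists>i0::nat. infinite I \<and>
                 (INF i\<in>I. measure M (E i)) > c0 \<and>
                 (\<forall>i\<in>I. i \<ge> i0 \<longrightarrow>
                    measure M ((\<Union>j\<in>{q1..q2}. E j) \<inter> E i)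
                      \<le> (1 + \<delta>) * measure M (\<Union>j\<in>{q1..q2}. E j) * measure M (E i))))"
  then obtain c0 :: real where c0: "0 < c0" and H: "\<forall>\<delta>>0. \<forall>q1 q2::nat. q1 < q2 \<longrightarrow>
              (\<exists>I::nat set. \<exists>i0::nat. infinite I \<and>
                 (INF i\<in>I. measure M (E i)) > c0 \<and>
                 (\<forall>i\<in>I. i \<ge> i0 \<longrightarrow>
                    measure M ((\<Union>j\<in>{q1..q2}. E j) \<inter> E i)
                      \<le> (1 + \<delta>) * measure M (\<Union>j\<in>{q1..q2}. E j) * measure M (E i)))" by blast
  show "measure M (limsup_set E) = 1"
  proof (rule core[OF assms c0])
    fix \<delta> :: real and q1 q2 :: nat assume "\<delta> > 0" "q1 < q2"
    with H obtain I i0 where I: "infinite I" "(INF i\<in>I. measure M (E i)) > c0"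
      "\<forall>i\<in>I. i \<ge> i0 \<longrightarrow>
                    measure M ((\<Union>j\<in>{q1..q2}. E j) \<inter> E i)
                      \<le> (1 + \<delta>) * measure M (\<Union>j\<in>{q1..q2}. E j) * measure M (E i)" by blast
    have "\<forall>i\<in>I. measure M (E i) \<ge> c0"
    proof
      fix i assume "i \<in> I"
      have "bdd_below ((\<lambda>i. measure M (E i)) ` I)" by (rule bdd_belowI[of _ 0]) auto
      then have "(INF i\<in>I. measure M (E i)) \<le> measure M (E i)" using \<open>i \<in> I\<close> by (rule cINF_lower)
      then show "measure M (E i) \<ge> c0" using I(2) by linarith
    qed
    with I show "\<exists>I i0. infinite I \<and> (\<forall>i\<in>I. measure M (E i) \<ge> c0) \<and>
       (\<forall>i\<in>I. i \<ge> i0 \<longrightarrow> measure M ((\<Union>j\<in>{q1..q2}. E j) \<inter> E i)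
                      \<le> (1 + \<delta>) * measure M (\<Union>j\<in>{q1..q2}. E j) * measure M (E i))" by blast
  qed
next
  interpret prob_space M by fact
  assume A: "limsup (\<lambda>i. ereal (measure M (E i))) > 0 \<and>
            (\<forall>\<delta>>0. \<forall>q1 q2::nat. q1 < q2 \<longrightarrow>
              (\<exists>i0::nat. \<forall>i\<ge>i0.
                 measure M ((\<Union>j\<in>{q1..q2}. E j) \<inter> E i)
                   \<le> (1 + \<delta>) * measure M (\<Union>j\<in>{q1..q2}. E j) * measure M (E i)))"
  then have "0 < limsup (\<lambda>i. ereal (measure M (E i)))" by blast
  from ereal_dense2[OF this] obtain r :: real where
    r0: "0 < ereal r" and rl: "ereal r < limsup (\<lambda>i. ereal (measure M (E i)))" by blast
  define c where "c = ereal r"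
  have c: "c < limsup (\<lambda>i. ereal (measure M (E i)))" using rl unfolding c_def .
  have r: "c = ereal r" "0 < r" using r0 unfolding c_def by simp_all
  have "\<not> eventually (\<lambda>i. ereal (measure M (E i)) \<le> c) sequentially"
  proof
    assume "eventually (\<lambda>i. ereal (measure M (E i)) \<le> c) sequentially"
    then have "limsup (\<lambda>i. ereal (measure M (E i))) \<le> c" by (rule Limsup_bounded)
    with c show False by simp
  qed
  have "frequently (\<lambda>i. measure M (E i) \<ge> r) sequentially"
    unfolding frequently_def
  proof
    assume "eventually (\<lambda>i. \<not> measure M (E i) \<ge> r) sequentially"
    then have "eventually (\<lambda>i. ereal (measure M (E i)) \<le> c) sequentially"
      by (rule eventually_mono) (auto simp: r(1))
    with \<open>\<not> eventually (\<lambda>i. ereal (measure M (E i)) \<le> c) sequentially\<close> show False by blast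
  qed
  then have infI: "infinite {i. measure M (E i) \<ge> r}"
    using frequently_cofinite[of "\<lambda>i. measure M (E i) \<ge> r"] by (simp add: cofinite_eq_sequentially)
  show "measure M (limsup_set E) = 1"
  proof (rule core[OF assms r(2)])
    fix \<delta> :: real and q1 q2 :: nat assume "\<delta> > 0" "q1 < q2"
    with A obtain i0 where "\<forall>i\<ge>i0.
                 measure M ((\<Union>j\<in>{q1..q2}. E j) \<inter> E i)
                   \<le> (1 + \<delta>) * measure M (\<Union>j\<in>{q1..q2}. E j) * measure M (E i)" by blast
    with infI show "\<exists>I i0. infinite I \<and> (\<forall>i\<in>I. measure M (E i) \<ge> r) \<and>
       (\<forall>i\<in>I. i \<ge> i0 \<longrightarrow> measure M ((\<Union>j\<in>{q1..q2}. E j) \<inter> E i)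
                      \<le> (1 + \<delta>) * measure M (\<Union>j\<in>{q1..q2}. E j) * measure M (E i))"
      by (intro exI[of _ "{i. measure M (E i) \<ge> r}"] exI[of _ i0]) auto
  qed
qed

end
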